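(* Let $k\ge 2$ be an integer, let $\lambda>0$, and let $Y_{k,\lambda}$ be a random variable having the Poisson distribution of order $k$ with parameter $\lambda$. Let $\nu$ be an integer with $0\le \nu\le k$. Then $P(Y_{k,\lambda}\le \nu)=\tfrac12$ if and only if $$\frac{e^{k\lambda}}{2}=\sum_{j=0}^{\nu}\binom{\nu}{j}\frac{\lambda^j}{j!}.$$
   Context: The Poisson distribution of order $k$ with parameter $\lambda>0$ (for an integer $k\ge1$) is the distribution on $\{0,1,2,\dots\}$ with probability generating function $E[x^{Y_{k,\lambda}}]=\exp\bigl(-k\lambda\bigr)\exp\bigl(\lambda\sum_{i=1}^{k}x^i\bigr)$, i.e. the compound Poisson distribution with pgf $\exp\bigl(-\sum_i a_i\bigr)\exp\bigl(\sum_i a_i x^i\bigr)$ where $a_1=\dots=a_k=\lambda$ and all other $a_i=0$. Equivalently, its probability mass function $p_n=P(Y_{k,\lambda}=n)$ satisfies $p_0=e^{-k\lambda}$ and $p_n=e^{-k\lambda}\sum_{j=1}^{n}\binom{n-1}{j-1}\frac{\lambda^j}{j!}$ for $n=1,\dots,k$. The median is defined as the smallest integer $\nu$ with $P(Y_{k,\lambda}\le\nu)\ge\tfrac12$; the displayed equation is the equation determining the value of $\lambda$ at which $P(Y_{k,\lambda}\le\nu)=\tfrac12$. *)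

theory Defs
  imports "HOL-Probability.Probability"
begin

text \<open>Probability mass function of the Poisson distribution of order k with parameter lam,
  i.e. the coefficient of x^n in exp(-k lam) * exp(lam * (x + ... + x^k)):
  p_n = exp(-k lam) * sum over (m_1,...,m_k) with m_1 + 2 m_2 + ... + k m_k = n
        of prod_i lam^(m_i) / m_i!.\<close>
definition poisson_order_pmf :: "nat \<Rightarrow> real \<Rightarrow> nat \<Rightarrow> real" where
  "poisson_order_pmf k lam n =
     exp (- (real k * lam)) *
     (\<Sum>m\<in>{m \<in> {1..k} \<rightarrow>\<^sub>E {..n}. (\<Sum>i\<in>{1..k}. i * m i) = n}.
        \<Prod>i\<in>{1..k}. lam ^ m i / fact (m i))"

end

theory Submission imports Defs begin

definition Dset :: "nat \<Rightarrow> nat \<Rightarrow> (nat \<Rightarrow> nat) set" where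
  "Dset k n = {m \<in> {1..k} \<rightarrow>\<^sub>E {..n}. (\<Sum>i\<in>{1..k}. i * m i) = n}"
definition wt :: "nat \<Rightarrow> real \<Rightarrow> (nat \<Rightarrow> nat) \<Rightarrow> real" where
  "wt k lam m = (\<Prod>i\<in>{1..k}. lam ^ m i / fact (m i))"
definition cc :: "nat \<Rightarrow> real \<Rightarrow> nat \<Rightarrow> real" where
  "cc k lam n = (\<Sum>m\<in>Dset k n. wt k lam m)"

lemma finite_Dset: "finite (Dset k n)"
proof (rule finite_subset[of _ "{1..k} \<rightarrow>\<^sub>E {..n}"])
  show "Dset k n \<subseteq> {1..k} \<rightarrow>\<^sub>E {..n}" unfolding Dset_def by blast
qed (rule finite_PiE; auto)

lemma Dset_iff: "m \<in> Dset k n \<longleftrightarrow> m \<in> extensional {1..k} \<and> (\<Sum>i\<in>{1..k}. i * m i) = n"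
proof
  assume "m \<in> extensional {1..k} \<and> (\<Sum>i\<in>{1..k}. i * m i) = n"
  then have e: "m \<in> extensional {1..k}" and s: "(\<Sum>i\<in>{1..k}. i * m i) = n" by auto
  have "m j \<le> n" if "j \<in> {1..k}" for j
  proof -
    have "m j \<le> j * m j" using that by auto
    also have "\<dots> \<le> (\<Sum>i\<in>{1..k}. i * m i)" by (rule member_le_sum) (use that in auto)
    finally show ?thesis using s by simp
  qed
  then show "m \<in> Dset k n" using e s unfolding Dset_def by (auto simp: PiE_iff)
qed (auto simp: Dset_def PiE_iff)

lemma sum_upd:
  assumes "finite A" "i \<in> A"
  shows "(\<Sum>j\<in>A. j * (m(i:=v)) j) + i * m i = (\<Sum>j\<in>A. j * m j) + i * (v::nat)"
proof -
  have "(\<Sum>j\<in>A. j * (m(i:=v)) j) = i * v + (\<Sum>j\<in>A-{i}. j * (m(i:=v)) j)"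
    using assms by (simp add: sum.remove)
  moreover have "(\<Sum>j\<in>A. j * m j) = i * m i + (\<Sum>j\<in>A-{i}. j * m j)"
    using assms by (simp add: sum.remove)
  moreover have "(\<Sum>j\<in>A-{i}. j * (m(i:=v)) j) = (\<Sum>j\<in>A-{i}. j * m j)"
    by (rule sum.cong) auto
  ultimately show ?thesis by simp
qed

lemma prod_upd:
  assumes "finite A" "i \<in> A"
  shows "(\<Prod>j\<in>A. g ((m(i:=v)) j)) * g (m i) = (\<Prod>j\<in>A. g (m j)) * (g v :: real)"
proof -
  have "(\<Prod>j\<in>A. g ((m(i:=v)) j)) = g v * (\<Prod>j\<in>A-{i}. g ((m(i:=v)) j))"
    using assms by (simp add: prod.remove)
  moreover have "(\<Prod>j\<in>A. g (m j)) = g (m i) * (\<Prod>j\<in>A-{i}. g (m j))"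
    using assms by (simp add: prod.remove)
  moreover have "(\<Prod>j\<in>A-{i}. g ((m(i:=v)) j)) = (\<Prod>j\<in>A-{i}. g (m j))"
    by (rule prod.cong) auto
  ultimately show ?thesis by simp
qed

lemma shift:
  assumes lam: "lam > 0" and i: "i \<in> {1..k}" "i \<le> n"
  shows "(\<Sum>m\<in>Dset k n. real (m i) * wt k lam m) = lam * cc k lam (n - i)"
proof -
  let ?S = "{m \<in> Dset k n. m i \<noteq> 0}"
  have "(\<Sum>m\<in>Dset k n. real (m i) * wt k lam m) = (\<Sum>m\<in>?S. real (m i) * wt k lam m)"
    by (rule sum.mono_neutral_right[OF finite_Dset]) auto
  also have "\<dots> = (\<Sum>m\<in>Dset k (n-i). lam * wt k lam m)"
  proof (rule sum.reindex_bij_witness[where i = "\<lambda>m. m(i := m i + 1)" and j = "\<lambda>m. m(i := m i - 1)"])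
    fix m assume "m \<in> ?S"
    then show "m(i := m i - 1, i := (m(i := m i - 1)) i + 1) = m" by auto
  next
    fix m assume m: "m \<in> ?S"
    then have e: "m \<in> extensional {1..k}" and s: "(\<Sum>j\<in>{1..k}. j * m j) = n" and nz: "m i \<noteq> 0"
      by (auto simp: Dset_iff)
    have "(\<Sum>j\<in>{1..k}. j * (m(i:=m i - 1)) j) + i * m i = n + i * (m i - 1)"
      using sum_upd[of "{1..k}" i m "m i - 1"] i s by simp
    moreover have "i * m i = i + i * (m i - 1)" using nz
      by (metis add.commute mult.commute mult_Suc Suc_pred' not_gr0)
    ultimately have "(\<Sum>j\<in>{1..k}. j * (m(i:=m i - 1)) j) = n - i" by linarith
    moreover have "m(i:=m i - 1) \<in> extensional {1..k}" using e i by (auto simp: extensional_def)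
    ultimately show "m(i := m i - 1) \<in> Dset k (n - i)" by (simp add: Dset_iff)
  next
    fix m assume "m \<in> Dset k (n-i)"
    then show "m(i := m i + 1, i := (m(i := m i + 1)) i - 1) = m" by auto
  next
    fix m assume m: "m \<in> Dset k (n-i)"
    then have e: "m \<in> extensional {1..k}" and s: "(\<Sum>j\<in>{1..k}. j * m j) = n - i"
      by (auto simp: Dset_iff)
    have "(\<Sum>j\<in>{1..k}. j * (m(i:=m i + 1)) j) + i * m i = (n - i) + i * (m i + 1)"
      using sum_upd[of "{1..k}" i m "m i + 1"] i s by simp
    then have "(\<Sum>j\<in>{1..k}. j * (m(i:=m i + 1)) j) = n" using i by (simp add: algebra_simps)
    moreover have "m(i:=m i + 1) \<in> extensional {1..k}" using e i by (auto simp: extensional_def)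
    ultimately show "m(i := m i + 1) \<in> ?S" by (simp add: Dset_iff)
  next
    fix m assume m: "m \<in> ?S"
    then obtain b where b: "m i = Suc b" by (cases "m i") auto
    let ?g = "\<lambda>t. lam ^ t / fact t"
    have pu: "(\<Prod>j\<in>{1..k}. ?g ((m(i:=b)) j)) * ?g (m i) = (\<Prod>j\<in>{1..k}. ?g (m j)) * ?g b"
      by (rule prod_upd) (use i in auto)
    have fb: "(fact b :: real) > 0" by simp
    have ga: "real (m i) * ?g (m i) = lam * ?g b" unfolding b using fb
      by (simp add: field_simps del: of_nat_Suc)
    have gb: "?g b \<noteq> 0" using lam by simp
    have "real (m i) * wt k lam m * ?g b = lam * wt k lam (m(i:=b)) * ?g b"
      unfolding wt_def using pu ga
      by (metis (no_types, lifting) mult.assoc mult.commute)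
    then show "lam * wt k lam (m(i := m i - 1)) = real (m i) * wt k lam m"
      using gb b lam by auto
  qed
  also have "\<dots> = lam * cc k lam (n - i)" unfolding cc_def by (simp add: sum_distrib_left)
  finally show ?thesis .
qed

lemma zero_if_big:
  assumes "m \<in> Dset k n" "i \<in> {1..k}" "n < i"
  shows "m i = 0"
proof (rule ccontr)
  assume "m i \<noteq> 0"
  then have "i \<le> i * m i" by simp
  also have "\<dots> \<le> (\<Sum>j\<in>{1..k}. j * m j)" by (rule member_le_sum) (use assms in auto)
  also have "\<dots> = n" using assms by (simp add: Dset_iff)
  finally show False using assms by simp
qed

lemma recur:
  assumes lam: "lam > 0" and n: "n \<le> k"
  shows "real n * cc k lam n = lam * (\<Sum>i\<in>{1..n}. real i * cc k lam (n - i))"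
proof -
  have "real n * cc k lam n = (\<Sum>m\<in>Dset k n. real (\<Sum>i\<in>{1..k}. i * m i) * wt k lam m)"
    unfolding cc_def sum_distrib_left by (rule sum.cong) (auto simp: Dset_iff)
  also have "\<dots> = (\<Sum>m\<in>Dset k n. \<Sum>i\<in>{1..k}. real i * (real (m i) * wt k lam m))"
    by (simp add: sum_distrib_right sum_distrib_left mult_ac)
  also have "\<dots> = (\<Sum>i\<in>{1..k}. real i * (\<Sum>m\<in>Dset k n. real (m i) * wt k lam m))"
    by (subst sum.swap) (simp add: sum_distrib_left)
  also have "\<dots> = (\<Sum>i\<in>{1..k}. if i \<le> n then real i * (lam * cc k lam (n - i)) else 0)"
  proof (rule sum.cong)
    fix i assume i: "i \<in> {1..k}"
    show "real i * (\<Sum>m\<in>Dset k n. real (m i) * wt k lam m) =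
      (if i \<le> n then real i * (lam * cc k lam (n - i)) else 0)"
    proof (cases "i \<le> n")
      case True then show ?thesis using shift[OF lam i True] by simp
    next
      case False then show ?thesis using zero_if_big[of _ k n i] i by (simp add: sum.neutral)
    qed
  qed simp
  also have "\<dots> = (\<Sum>i\<in>{1..n}. real i * (lam * cc k lam (n - i)))"
    using n by (subst sum.inter_filter[symmetric]) (auto intro!: sum.cong)
  also have "\<dots> = lam * (\<Sum>i\<in>{1..n}. real i * cc k lam (n - i))"
    by (simp add: sum_distrib_left algebra_simps)
  finally show ?thesis .
qed

lemma cc0: "cc k lam 0 = 1"
proof -
  have "Dset k 0 = {restrict (\<lambda>_. 0) {1..k}}"
  proof
    show "Dset k 0 \<subseteq> {restrict (\<lambda>_. 0) {1..k}}"
    proof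
      fix m assume "m \<in> Dset k 0"
      then have e: "m \<in> extensional {1..k}" and s: "(\<Sum>i\<in>{1..k}. i * m i) = 0" by (auto simp: Dset_iff)
      have "\<forall>i\<in>{1..k}. i * m i = 0" using s by simp
      then have "\<forall>i\<in>{1..k}. m i = 0" by auto
      then show "m \<in> {restrict (\<lambda>_. 0) {1..k}}" using e
        by (auto simp: extensional_def restrict_def fun_eq_iff)
    qed
  qed (auto simp: Dset_iff)
  then show ?thesis by (simp add: cc_def wt_def)
qed

lemma triangle:
  fixes c :: "nat \<Rightarrow> real"
  shows "(\<Sum>i\<in>{1..N}. real i * c (N - i)) = (\<Sum>r<N. \<Sum>l\<le>r. c l)"
proof (induction N)
  case 0 then show ?case by simp
next
  case (Suc N)
  have "(\<Sum>i\<in>{1..Suc N}. real i * c (Suc N - i)) = (\<Sum>i\<in>{0..N}. real (Suc i) * c (N - i))"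
    unfolding One_nat_def sum.shift_bounds_cl_Suc_ivl by simp
  also have "\<dots> = (\<Sum>i\<in>{0..N}. c (N - i)) + (\<Sum>i\<in>{0..N}. real i * c (N - i))"
    by (simp add: sum.distrib algebra_simps)
  also have "(\<Sum>i\<in>{0..N}. c (N - i)) = (\<Sum>l\<le>N. c l)"
    using sum.atLeastAtMost_rev[of c 0 N] by (simp add: atLeast0AtMost)
  also have "(\<Sum>i\<in>{0..N}. real i * c (N - i)) = (\<Sum>i\<in>{1..N}. real i * c (N - i))"
    by (simp add: sum.atLeast_Suc_atMost atLeast0AtMost[symmetric])
  finally show ?case using Suc by simp
qed

definition TT :: "real \<Rightarrow> nat \<Rightarrow> real" where
  "TT lam n = (\<Sum>j\<le>n. real (n choose j) * lam ^ j / fact j)"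

lemma TT_sum: "(\<Sum>r\<le>p. TT lam r) = (\<Sum>j\<le>p. real (Suc p choose Suc j) * lam ^ j / fact j)"
proof -
  have "(\<Sum>r\<le>p. TT lam r) = (\<Sum>r\<le>p. \<Sum>j\<le>p. real (r choose j) * lam ^ j / fact j)"
    unfolding TT_def
  proof (rule sum.cong)
    fix r assume "r \<in> {..p}"
    then show "(\<Sum>j\<le>r. real (r choose j) * lam ^ j / fact j) = (\<Sum>j\<le>p. real (r choose j) * lam ^ j / fact j)"
      by (intro sum.mono_neutral_left) auto
  qed simp
  also have "\<dots> = (\<Sum>j\<le>p. (\<Sum>r\<le>p. real (r choose j)) * lam ^ j / fact j)"
    by (subst sum.swap) (simp add: sum_distrib_right sum_divide_distrib)
  also have "\<dots> = (\<Sum>j\<le>p. real (Suc p choose Suc j) * lam ^ j / fact j)"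
    by (simp only: of_nat_sum[symmetric] sum_choose_upper)
  finally show ?thesis .
qed

lemma TT_step: "TT lam (Suc p) = TT lam p + lam / real (Suc p) * (\<Sum>r\<le>p. TT lam r)"
proof -
  have a: "TT lam (Suc p) = 1 + (\<Sum>j\<le>p. real (Suc p choose Suc j) * lam ^ Suc j / fact (Suc j))"
    unfolding TT_def by (subst sum.atMost_Suc_shift) simp
  have b: "TT lam p = 1 + (\<Sum>j\<le>p. real (p choose Suc j) * lam ^ Suc j / fact (Suc j))"
  proof -
    have "TT lam p = (\<Sum>j\<le>Suc p. real (p choose j) * lam ^ j / fact j)"
      unfolding TT_def by (intro sum.mono_neutral_left) auto
    then show ?thesis by (subst (asm) sum.atMost_Suc_shift) simp
  qed
  have c: "TT lam (Suc p) - TT lam p = (\<Sum>j\<le>p. real (p choose j) * lam ^ Suc j / fact (Suc j))"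
    unfolding a b by (simp add: sum_subtractf[symmetric] algebra_simps add_divide_distrib)
  have d: "real (p choose j) * lam ^ Suc j / fact (Suc j) =
      lam / real (Suc p) * (real (Suc p choose Suc j) * lam ^ j / fact j)" for j
  proof -
    have e: "real (Suc p) * real (p choose j) = real (Suc p choose Suc j) * real (Suc j)"
      by (metis Suc_times_binomial_eq of_nat_mult)
    have "fact (Suc j) = real (Suc j) * fact j" by simp
    then show ?thesis using e
      by (simp add: field_simps del: of_nat_Suc)
  qed
  have "TT lam (Suc p) - TT lam p = lam / real (Suc p) * (\<Sum>r\<le>p. TT lam r)"
    unfolding c TT_sum sum_distrib_left d ..
  then show ?thesis by simp
qed

lemma main_ident:
  assumes lam: "lam > 0" and n: "n \<le> k"
  shows "(\<Sum>l\<le>n. cc k lam l) = TT lam n"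
  using n
proof (induction n rule: less_induct)
  case (less n)
  show ?case
  proof (cases n)
    case 0 then show ?thesis by (simp add: cc0 TT_def)
  next
    case (Suc p)
    have IH: "\<And>r. r \<le> p \<Longrightarrow> (\<Sum>l\<le>r. cc k lam l) = TT lam r" using less Suc by auto
    have "real n * cc k lam n = lam * (\<Sum>r<n. \<Sum>l\<le>r. cc k lam l)"
      using recur[OF lam less(2)] triangle by simp
    also have "(\<Sum>r<n. \<Sum>l\<le>r. cc k lam l) = (\<Sum>r\<le>p. TT lam r)"
      unfolding Suc lessThan_Suc_atMost using IH by simp
    finally have "cc k lam n = lam / real (Suc p) * (\<Sum>r\<le>p. TT lam r)"
      using Suc by (simp add: field_simps del: of_nat_Suc)
    then show ?thesis using IH[of p] Suc TT_step by simp
  qed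
qed

theorem mainTheorem1:
  fixes M :: "'a measure" and Y :: "'a \<Rightarrow> nat" and k \<nu> :: nat and lam :: real
  assumes "prob_space M"
    and "Y \<in> measurable M (count_space UNIV)"
    and "\<And>n. measure M {\<omega> \<in> space M. Y \<omega> = n} = poisson_order_pmf k lam n"
    and "k \<ge> 2" and "lam > 0" and "\<nu> \<le> k"
  shows "measure M {\<omega> \<in> space M. Y \<omega> \<le> \<nu>} = 1/2 \<longleftrightarrow>
         exp (real k * lam) / 2 = (\<Sum>j=0..\<nu>. real (\<nu> choose j) * lam ^ j / fact j)"
proof -
  interpret prob_space M by fact
  let ?A = "\<lambda>n. {\<omega> \<in> space M. Y \<omega> = n}"
  have sets: "?A n \<in> sets M" for n
  proof -
    have "Y -` {n} \<inter> space M \<in> sets M" using assms(2) by (rule measurable_sets) simp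
    moreover have "Y -` {n} \<inter> space M = ?A n" by auto
    ultimately show ?thesis by simp
  qed
  have U: "{\<omega> \<in> space M. Y \<omega> \<le> \<nu>} = (\<Union>n\<in>{..\<nu>}. ?A n)" by auto
  have "measure M {\<omega> \<in> space M. Y \<omega> \<le> \<nu>} = (\<Sum>n\<le>\<nu>. measure M (?A n))"
    unfolding U
    by (rule measure_finite_Union) (use sets in \<open>auto simp: disjoint_family_on_def emeasure_eq_measure\<close>)
  also have "\<dots> = (\<Sum>n\<le>\<nu>. exp (- (real k * lam)) * cc k lam n)"
    using assms(3) by (simp add: poisson_order_pmf_def cc_def Dset_def wt_def)
  also have "\<dots> = exp (- (real k * lam)) * TT lam \<nu>"
    using main_ident[OF assms(5) assms(6)] by (simp add: sum_distrib_left[symmetric])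
  finally have P: "measure M {\<omega> \<in> space M. Y \<omega> \<le> \<nu>} = exp (- (real k * lam)) * TT lam \<nu>" .
  have T: "(\<Sum>j=0..\<nu>. real (\<nu> choose j) * lam ^ j / fact j) = TT lam \<nu>"
    by (simp add: TT_def atLeast0AtMost)
  show ?thesis unfolding P T
    by (auto simp: exp_minus field_simps)
qed

end
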